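(* For every language $L$, $Q^{1}_L\mathrm{FO}(+,\times)\equiv Q^{\star}_L\mathrm{FO}(+,\times)$.
   Context: Strings as structures: a nonempty string $b_0\cdots b_{n-1}$ over the ordered alphabet $(a_1,\dots,a_s)$ is the structure with universe $\{0,\dots,n-1\}$, natural order $<$, and unary predicates $P_{a_i}=\{j:b_j=a_i\}$. FO uses $=$, $<$, these predicates, $\min,\max$, connectives, $\exists,\forall$; "$+,\times$" means the ternary relations $i+j=k$ and $i\cdot j=k$ are additionally built in. Monadic second-order Lindström quantifiers: for a language $L$ over $(a_1,\dots,a_s)$ and distinct unary second-order variables $\overline X=(X_1,\dots,X_k)$, over universe $\{0,\dots,n-1\}$ and an assignment $(A_1,\dots,A_k)$ let $s^i_j=1$ iff $j\in A_i$. For $Q^1_L$ the $2^{nk}$ assignments are ordered lexicographically by the interleaved code $s^1_0\cdots s^k_0s^1_1\cdots s^k_1\cdots s^1_{n-1}\cdots s^k_{n-1}$; for $Q^\star_L$ by the concatenated code $s^1_0\cdots s^1_{n-1}\cdots s^k_0\cdots s^k_{n-1}$. Then $\mathcal A\models Q\overline X[\varphi_1,\dots,\varphi_{s-1}]$ iff the word of length $2^{nk}$ whose $i$-th letter is $a_j$ for the least $j$ with $\varphi_j$ true at the $i$-th assignment (and $a_s$ if none) lies in $L$. $Q^1_L\mathrm{FO}(+,\times)$ consists of all formulas $Q^1_L\overline X[\varphi_1,\dots,\varphi_{s-1}]$ with $\varphi_i$ first-order formulas (built-in $<,+,\times$) possibly containing $\overline X$; $Q^\star_L\mathrm{FO}(+,\times)$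 likewise with $Q^\star_L$. $\mathcal L\equiv\mathcal L'$ means over every string signature every sentence of either logic has an equivalent sentence of the other. *)

theory Defs
  imports Main
begin

text \<open>Strings over the alphabet (a_1,...,a_t) are encoded as nonempty lists of naturals
  below t (letter a_i is encoded as i-1).  Positions are 0..n-1.\<close>

definition strings :: "nat \<Rightarrow> nat list set" where
  "strings t = {w. w \<noteq> [] \<and> set w \<subseteq> {..<t}}"

datatype trm = TVar nat | TMin | TMax

datatype fo =
    FEq trm trm
  | FLess trm trm
  | FLetter nat trm          (* P_{a_(i+1)}(x) *)
  | FPlus trm trm trm
  | FTimes trm trm trm
  | FMem nat trm
  | FNot fo
  | FAnd fo fo
  | FOr fo fo
  | FEx nat fo
  | FAll nat fo

fun tval :: "nat list \<Rightarrow> (nat \<Rightarrow> nat) \<Rightarrow> trm \<Rightarrow> nat" where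
  "tval w \<sigma> (TVar i) = \<sigma> i"
| "tval w \<sigma> TMin = 0"
| "tval w \<sigma> TMax = length w - 1"

fun sat :: "nat list \<Rightarrow> (nat \<Rightarrow> nat) \<Rightarrow> (nat \<Rightarrow> nat set) \<Rightarrow> fo \<Rightarrow> bool" where
  "sat w \<sigma> \<Gamma> (FEq x y) = (tval w \<sigma> x = tval w \<sigma> y)"
| "sat w \<sigma> \<Gamma> (FLess x y) = (tval w \<sigma> x < tval w \<sigma> y)"
| "sat w \<sigma> \<Gamma> (FLetter a x) = (tval w \<sigma> x < length w \<and> w ! tval w \<sigma> x = a)"
| "sat w \<sigma> \<Gamma> (FPlus x y z) = (tval w \<sigma> x + tval w \<sigma> y = tval w \<sigma> z)"
| "sat w \<sigma> \<Gamma> (FTimes x y z) = (tval w \<sigma> x * tval w \<sigma> y = tval w \<sigma> z)"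
| "sat w \<sigma> \<Gamma> (FMem i x) = (tval w \<sigma> x \<in> \<Gamma> i)"
| "sat w \<sigma> \<Gamma> (FNot \<phi>) = (\<not> sat w \<sigma> \<Gamma> \<phi>)"
| "sat w \<sigma> \<Gamma> (FAnd \<phi> \<psi>) = (sat w \<sigma> \<Gamma> \<phi> \<and> sat w \<sigma> \<Gamma> \<psi>)"
| "sat w \<sigma> \<Gamma> (FOr \<phi> \<psi>) = (sat w \<sigma> \<Gamma> \<phi> \<or> sat w \<sigma> \<Gamma> \<psi>)"
| "sat w \<sigma> \<Gamma> (FEx i \<phi>) = (\<exists>j<length w. sat w (\<sigma>(i := j)) \<Gamma> \<phi>)"
| "sat w \<sigma> \<Gamma> (FAll i \<phi>) = (\<forall>j<length w. sat w (\<sigma>(i := j)) \<Gamma> \<phi>)"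

fun tvars :: "trm \<Rightarrow> nat set" where
  "tvars (TVar i) = {i}" | "tvars TMin = {}" | "tvars TMax = {}"

fun fv :: "fo \<Rightarrow> nat set" where
  "fv (FEq x y) = tvars x \<union> tvars y"
| "fv (FLess x y) = tvars x \<union> tvars y"
| "fv (FLetter a x) = tvars x"
| "fv (FPlus x y z) = tvars x \<union> tvars y \<union> tvars z"
| "fv (FTimes x y z) = tvars x \<union> tvars y \<union> tvars z"
| "fv (FMem i x) = tvars x"
| "fv (FNot \<phi>) = fv \<phi>"
| "fv (FAnd \<phi> \<psi>) = fv \<phi> \<union> fv \<psi>"
| "fv (FOr \<phi> \<psi>) = fv \<phi> \<union> fv \<psi>"
| "fv (FEx i \<phi>) = fv \<phi> - {i}"
| "fv (FAll i \<phi>) = fv \<phi> - {i}"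

fun sovars :: "fo \<Rightarrow> nat set" where
  "sovars (FMem i x) = {i}"
| "sovars (FNot \<phi>) = sovars \<phi>"
| "sovars (FAnd \<phi> \<psi>) = sovars \<phi> \<union> sovars \<psi>"
| "sovars (FOr \<phi> \<psi>) = sovars \<phi> \<union> sovars \<psi>"
| "sovars (FEx i \<phi>) = sovars \<phi>"
| "sovars (FAll i \<phi>) = sovars \<phi>"
| "sovars _ = {}"

fun letters :: "fo \<Rightarrow> nat set" where
  "letters (FLetter a x) = {a}"
| "letters (FNot \<phi>) = letters \<phi>"
| "letters (FAnd \<phi> \<psi>) = letters \<phi> \<union> letters \<psi>"
| "letters (FOr \<phi> \<psi>) = letters \<phi> \<union> letters \<psi>"
| "letters (FEx i \<phi>) = letters \<phi>"
| "letters (FAll i \<phi>) = letters \<phi>"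
| "letters _ = {}"

fun bitlists :: "nat \<Rightarrow> bool list list" where
  "bitlists 0 = [[]]"
| "bitlists (Suc N) = map (Cons False) (bitlists N) @ map (Cons True) (bitlists N)"

text \<open>Decoding a code of length n*k into the assignment (A_0,...,A_(k-1)).
  Interleaved code: s^1_0...s^k_0 s^1_1 ... ; concatenated code: s^1_0...s^1_(n-1) ... \<close>
definition assign_interleaved :: "nat \<Rightarrow> nat \<Rightarrow> bool list \<Rightarrow> nat \<Rightarrow> nat set" where
  "assign_interleaved k n c = (\<lambda>i. {j. j < n \<and> c ! (j * k + i)})"

definition assign_concat :: "nat \<Rightarrow> nat \<Rightarrow> bool list \<Rightarrow> nat \<Rightarrow> nat set" where
  "assign_concat k n c = (\<lambda>i. {j. j < n \<and> c ! (i * n + j)})"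

text \<open>Letter (0-based) produced at an assignment: least j with phi_j true, else the last letter.\<close>
definition letter_at :: "nat list \<Rightarrow> (nat \<Rightarrow> nat set) \<Rightarrow> fo list \<Rightarrow> nat" where
  "letter_at w \<Gamma> \<phi>s =
     (if \<exists>j<length \<phi>s. sat w (\<lambda>_. 0) \<Gamma> (\<phi>s ! j)
      then (LEAST j. j < length \<phi>s \<and> sat w (\<lambda>_. 0) \<Gamma> (\<phi>s ! j))
      else length \<phi>s)"

definition quant_word ::
  "(nat \<Rightarrow> nat \<Rightarrow> bool list \<Rightarrow> nat \<Rightarrow> nat set) \<Rightarrow> nat list \<Rightarrow> nat \<Rightarrow> fo list \<Rightarrow> nat list" where
  "quant_word dec w k \<phi>s =
     map (\<lambda>c. letter_at w (dec k (length w) c) \<phi>s) (bitlists (length w * k))"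

definition holds_Q1 :: "nat list set \<Rightarrow> nat list \<Rightarrow> nat \<Rightarrow> fo list \<Rightarrow> bool" where
  "holds_Q1 L w k \<phi>s = (quant_word assign_interleaved w k \<phi>s \<in> L)"

definition holds_Qstar :: "nat list set \<Rightarrow> nat list \<Rightarrow> nat \<Rightarrow> fo list \<Rightarrow> bool" where
  "holds_Qstar L w k \<phi>s = (quant_word assign_concat w k \<phi>s \<in> L)"

text \<open>Syntactic well-formedness of a sentence Q X_0..X_(k-1) [phi_1..phi_(s-1)]
  over the string signature with t letters.\<close>
definition qsentence :: "nat \<Rightarrow> nat \<Rightarrow> nat \<Rightarrow> fo list \<Rightarrow> bool" where
  "qsentence s t k \<phi>s \<longleftrightarrow> 1 \<le> k \<and> length \<phi>s = s - 1 \<and>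
     (\<forall>\<phi>\<in>set \<phi>s. fv \<phi> = {} \<and> sovars \<phi> \<subseteq> {..<k} \<and> letters \<phi> \<subseteq> {..<t})"

end

theory Submission imports Defs begin

definition FF :: fo where "FF = FLess TMin TMin"

lemma sat_FF[simp]: "\<not> sat w \<sigma> \<Gamma> FF" by (simp add: FF_def)

fun ors :: "fo list \<Rightarrow> fo" where
  "ors [] = FF" | "ors (f # fs) = FOr f (ors fs)"

lemma sat_ors: "sat w \<sigma> \<Gamma> (ors fs) \<longleftrightarrow> (\<exists>f\<in>set fs. sat w \<sigma> \<Gamma> f)"
  by (induction fs) auto

definition Succ :: "nat \<Rightarrow> nat \<Rightarrow> nat \<Rightarrow> fo" where
  "Succ e u b = FAnd (FLess (TVar e) (TVar u))
      (FNot (FEx b (FAnd (FLess (TVar e) (TVar b)) (FLess (TVar b) (TVar u)))))"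

lemma sat_Succ:
  assumes "e < b" "u < b" "\<sigma> u < length w"
  shows "sat w \<sigma> \<Gamma> (Succ e u b) \<longleftrightarrow> \<sigma> u = Suc (\<sigma> e)"
proof -
  have "e \<noteq> b" "u \<noteq> b" using assms by auto
  then have "sat w \<sigma> \<Gamma> (Succ e u b) \<longleftrightarrow> \<sigma> e < \<sigma> u \<and> \<not> (\<exists>j<length w. \<sigma> e < j \<and> j < \<sigma> u)"
    unfolding Succ_def by simp
  also have "\<dots> \<longleftrightarrow> \<sigma> u = Suc (\<sigma> e)"
  proof
    assume h: "\<sigma> e < \<sigma> u \<and> \<not> (\<exists>j<length w. \<sigma> e < j \<and> j < \<sigma> u)"
    show "\<sigma> u = Suc (\<sigma> e)"
    proof (rule ccontr)
      assume "\<sigma> u \<noteq> Suc (\<sigma> e)"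
      then have "Suc (\<sigma> e) < \<sigma> u" using h by auto
      then show False using h assms(3) by (meson lessI less_trans)
    qed
  qed auto
  finally show ?thesis .
qed

definition Wrap :: "nat \<Rightarrow> nat \<Rightarrow> nat \<Rightarrow> nat \<Rightarrow> fo" where
  "Wrap u x v b = FEx b (FEx (Suc b) (FAnd (FPlus (TVar x) (TVar b) TMax)
      (FAnd (FPlus (TVar v) (TVar b) (TVar (Suc b))) (Succ (Suc b) u (Suc (Suc b))))))"

lemma sat_Wrap:
  assumes "w \<noteq> []" "\<forall>i. \<sigma> i < length w" "u < b" "x < b" "v < b"
  shows "sat w \<sigma> \<Gamma> (Wrap u x v b) \<longleftrightarrow> \<sigma> u + \<sigma> x = \<sigma> v + length w"
proof -
  have ne: "u \<noteq> b" "x \<noteq> b" "v \<noteq> b" "u \<noteq> Suc b" "x \<noteq> Suc b" "v \<noteq> Suc b" "b \<noteq> Suc b"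
    using assms by auto
  have S: "sat w (\<sigma>(b := d, Suc b := e)) \<Gamma> (Succ (Suc b) u (Suc (Suc b))) \<longleftrightarrow> \<sigma> u = Suc e" for d e
    using sat_Succ[of "Suc b" "Suc (Suc b)" u "\<sigma>(b := d, Suc b := e)" w \<Gamma>] assms ne by auto
  have "sat w \<sigma> \<Gamma> (Wrap u x v b) \<longleftrightarrow> (\<exists>d<length w. \<exists>e<length w. \<sigma> x + d = length w - 1 \<and> \<sigma> v + d = e \<and> \<sigma> u = Suc e)"
    unfolding Wrap_def using ne S by simp
  also have "\<dots> \<longleftrightarrow> \<sigma> u + \<sigma> x = \<sigma> v + length w"
  proof
    assume "\<sigma> u + \<sigma> x = \<sigma> v + length w"
    then show "\<exists>d<length w. \<exists>e<length w. \<sigma> x + d = length w - 1 \<and> \<sigma> v + d = e \<and> \<sigma> u = Suc e"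
      using assms(2)[rule_format, of x] assms(2)[rule_format, of u]
      by (intro exI[of _ "length w - 1 - \<sigma> x"] exI[of _ "\<sigma> u - 1"]) auto
  qed (use assms(1) in auto)
  finally show ?thesis .
qed

fun Pmul :: "nat \<Rightarrow> nat \<Rightarrow> nat \<Rightarrow> nat \<Rightarrow> nat \<Rightarrow> fo" where
  "Pmul 0 c x v b = (if c = 0 then FEq (TVar v) TMin else FF)"
| "Pmul (Suc j) c x v b = FEx b (FOr (FAnd (Pmul j c x b (Suc b)) (FPlus (TVar b) (TVar x) (TVar v)))
     (if c = 0 then FF else FAnd (Pmul j (c - 1) x b (Suc b)) (Wrap b x v (Suc b))))"

lemma sat_Pmul:
  assumes "w \<noteq> []" "\<forall>i. \<sigma> i < length w" "x < b" "v < b"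
  shows "sat w \<sigma> \<Gamma> (Pmul j c x v b) \<longleftrightarrow> \<sigma> x * j = c * length w + \<sigma> v"
  using assms(2-4)
proof (induction j arbitrary: c \<sigma> v b)
  case 0
  then show ?case using assms(1) by simp
next
  case (Suc j)
  define n where "n = length w"
  have n: "n \<ge> 1" using assms(1) by (cases w) (auto simp: n_def)
  have ne: "x \<noteq> b" "v \<noteq> b" using Suc.prems by auto
  have inv: "\<forall>i. (\<sigma>(b := u)) i < length w" if "u < length w" for u
    using Suc.prems(1) that by auto
  have IH: "sat w (\<sigma>(b := u)) \<Gamma> (Pmul j c' x b (Suc b)) \<longleftrightarrow> \<sigma> x * j = c' * n + u"
    if "u < n" for u c'
    using Suc.IH[where c=c' and \<sigma>="\<sigma>(b := u)" and v=b and b="Suc b"] inv[of u] that Suc.prems ne by (simp add: n_def fun_upd_def)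
  have W: "sat w (\<sigma>(b := u)) \<Gamma> (Wrap b x v (Suc b)) \<longleftrightarrow> u + \<sigma> x = \<sigma> v + n"
    if "u < n" for u
  proof -
    have "sat w (\<sigma>(b := u)) \<Gamma> (Wrap b x v (Suc b)) \<longleftrightarrow> (\<sigma>(b := u)) b + (\<sigma>(b := u)) x = (\<sigma>(b := u)) v + length w"
      by (rule sat_Wrap) (use assms(1) inv[of u] that Suc.prems in \<open>auto simp: n_def\<close>)
    then show ?thesis using ne by (simp add: n_def)
  qed
  have "sat w \<sigma> \<Gamma> (Pmul (Suc j) c x v b) \<longleftrightarrow>
     (\<exists>u<n. (\<sigma> x * j = c * n + u \<and> u + \<sigma> x = \<sigma> v) \<or>
        (c \<noteq> 0 \<and> \<sigma> x * j = (c - 1) * n + u \<and> u + \<sigma> x = \<sigma> v + n))"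
    using IH W ne by (auto simp add: n_def[symmetric])
  also have "\<dots> \<longleftrightarrow> \<sigma> x * Suc j = c * n + \<sigma> v"
  proof
    assume "\<exists>u<n. (\<sigma> x * j = c * n + u \<and> u + \<sigma> x = \<sigma> v) \<or>
        (c \<noteq> 0 \<and> \<sigma> x * j = (c - 1) * n + u \<and> u + \<sigma> x = \<sigma> v + n)"
    then obtain u where "u < n" "(\<sigma> x * j = c * n + u \<and> u + \<sigma> x = \<sigma> v) \<or>
        (c \<noteq> 0 \<and> \<sigma> x * j = (c - 1) * n + u \<and> u + \<sigma> x = \<sigma> v + n)" by blast
    from this(2) show "\<sigma> x * Suc j = c * n + \<sigma> v"
    proof
      assume h: "c \<noteq> 0 \<and> \<sigma> x * j = (c - 1) * n + u \<and> u + \<sigma> x = \<sigma> v + n"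
      then obtain c' where c: "c = Suc c'" by (cases c) auto
      show ?thesis using h unfolding c by simp
    qed simp
  next
    assume h: "\<sigma> x * Suc j = c * n + \<sigma> v"
    have vn: "\<sigma> v < n" "\<sigma> x < n" using Suc.prems(1) by (auto simp: n_def)
    show "\<exists>u<n. (\<sigma> x * j = c * n + u \<and> u + \<sigma> x = \<sigma> v) \<or>
        (c \<noteq> 0 \<and> \<sigma> x * j = (c - 1) * n + u \<and> u + \<sigma> x = \<sigma> v + n)"
    proof (cases "\<sigma> x \<le> \<sigma> v")
      case True
      then show ?thesis using h vn by (intro exI[of _ "\<sigma> v - \<sigma> x"]) auto
    next
      case False
      then have "c \<noteq> 0" using h by (cases c) auto
      then obtain c' where c: "c = Suc c'" by (cases c) auto
      show ?thesis using h vn False unfolding c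
        by (intro exI[of _ "\<sigma> v + n - \<sigma> x"]) auto
    qed
  qed
  finally show ?case by (simp add: n_def)
qed

fun Padd :: "nat \<Rightarrow> nat \<Rightarrow> nat \<Rightarrow> nat \<Rightarrow> nat \<Rightarrow> nat \<Rightarrow> fo" where
  "Padd k 0 c x v b = Pmul k c x v b"
| "Padd k (Suc i) c x v b = FEx b (FOr (FAnd (Padd k i c x b (Suc b)) (Succ b v (Suc b)))
     (if c = 0 then FF else FAnd (Padd k i (c - 1) x b (Suc b)) (FAnd (FEq (TVar b) TMax) (FEq (TVar v) TMin))))"

lemma sat_Padd:
  assumes "w \<noteq> []" "\<forall>i. \<sigma> i < length w" "x < b" "v < b"
  shows "sat w \<sigma> \<Gamma> (Padd k i c x v b) \<longleftrightarrow> \<sigma> x * k + i = c * length w + \<sigma> v"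
  using assms(2-4)
proof (induction i arbitrary: c \<sigma> v b)
  case 0
  then show ?case using sat_Pmul[OF assms(1)] by simp
next
  case (Suc i)
  define n where "n = length w"
  have n: "n \<ge> 1" using assms(1) by (cases w) (auto simp: n_def)
  have ne: "x \<noteq> b" "v \<noteq> b" using Suc.prems by auto
  have inv: "\<forall>i. (\<sigma>(b := u)) i < length w" if "u < length w" for u
    using Suc.prems(1) that by auto
  have IH: "sat w (\<sigma>(b := u)) \<Gamma> (Padd k i c' x b (Suc b)) \<longleftrightarrow> \<sigma> x * k + i = c' * n + u"
    if "u < n" for u c'
    using Suc.IH[where c=c' and \<sigma>="\<sigma>(b := u)" and v=b and b="Suc b"] inv[of u] that Suc.prems ne
    by (simp add: n_def fun_upd_def)
  have S: "sat w (\<sigma>(b := u)) \<Gamma> (Succ b v (Suc b)) \<longleftrightarrow> \<sigma> v = Suc u"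
    if "u < n" for u
  proof -
    have "sat w (\<sigma>(b := u)) \<Gamma> (Succ b v (Suc b)) \<longleftrightarrow> (\<sigma>(b := u)) v = Suc ((\<sigma>(b := u)) b)"
      by (rule sat_Succ) (use Suc.prems in auto)
    then show ?thesis using ne by simp
  qed
  have "sat w \<sigma> \<Gamma> (Padd k (Suc i) c x v b) \<longleftrightarrow>
     (\<exists>u<n. (\<sigma> x * k + i = c * n + u \<and> \<sigma> v = Suc u) \<or>
        (c \<noteq> 0 \<and> \<sigma> x * k + i = (c - 1) * n + u \<and> u = n - 1 \<and> \<sigma> v = 0))"
    using IH S ne by (auto simp add: n_def[symmetric])
  also have "\<dots> \<longleftrightarrow> \<sigma> x * k + Suc i = c * n + \<sigma> v"
  proof
    assume "\<exists>u<n. (\<sigma> x * k + i = c * n + u \<and> \<sigma> v = Suc u) \<or>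
        (c \<noteq> 0 \<and> \<sigma> x * k + i = (c - 1) * n + u \<and> u = n - 1 \<and> \<sigma> v = 0)"
    then obtain u where "u < n" "(\<sigma> x * k + i = c * n + u \<and> \<sigma> v = Suc u) \<or>
        (c \<noteq> 0 \<and> \<sigma> x * k + i = (c - 1) * n + u \<and> u = n - 1 \<and> \<sigma> v = 0)" by blast
    from this(2) show "\<sigma> x * k + Suc i = c * n + \<sigma> v"
    proof
      assume h: "c \<noteq> 0 \<and> \<sigma> x * k + i = (c - 1) * n + u \<and> u = n - 1 \<and> \<sigma> v = 0"
      then obtain c' where c: "c = Suc c'" by (cases c) auto
      show ?thesis using h n unfolding c by simp
    qed simp
  next
    assume h: "\<sigma> x * k + Suc i = c * n + \<sigma> v"
    have vn: "\<sigma> v < n" using Suc.prems(1) by (auto simp: n_def)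
    show "\<exists>u<n. (\<sigma> x * k + i = c * n + u \<and> \<sigma> v = Suc u) \<or>
        (c \<noteq> 0 \<and> \<sigma> x * k + i = (c - 1) * n + u \<and> u = n - 1 \<and> \<sigma> v = 0)"
    proof (cases "\<sigma> v")
      case (Suc u)
      then show ?thesis using h vn by (intro exI[of _ u]) auto
    next
      case 0
      then have "c \<noteq> 0" using h by (cases c) auto
      then obtain c' where c: "c = Suc c'" by (cases c) auto
      show ?thesis using h n 0 unfolding c
        by (intro exI[of _ "n - 1"]) auto
    qed
  qed
  finally show ?case by (simp add: n_def)
qed

lemma tval_cong: "(\<And>i. i \<in> tvars t \<Longrightarrow> \<sigma> i = \<sigma>' i) \<Longrightarrow> tval w \<sigma> t = tval w \<sigma>' t"
  by (cases t) auto

lemma tval_lt: "w \<noteq> [] \<Longrightarrow> \<forall>i. \<sigma> i < length w \<Longrightarrow> tval w \<sigma> t < length w"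
  by (cases t) auto

definition thA :: "nat \<Rightarrow> nat \<Rightarrow> nat \<Rightarrow> trm \<Rightarrow> fo" where
  "thA k B a t = FEx B (FAnd (FEq (TVar B) t) (ors (map (\<lambda>q. FEx (Suc B)
      (FAnd (Padd k a q B (Suc B) (Suc (Suc B))) (FMem q (TVar (Suc B))))) [0..<k])))"

definition thB :: "nat \<Rightarrow> nat \<Rightarrow> nat \<Rightarrow> trm \<Rightarrow> fo" where
  "thB k B q t = FEx B (FAnd (FEq (TVar B) t) (ors (map (\<lambda>a. FEx (Suc B)
      (FAnd (Padd k a q (Suc B) B (Suc (Suc B))) (FMem a (TVar (Suc B))))) [0..<k])))"

lemma sat_thA_raw:
  assumes "w \<noteq> []" "\<forall>i. \<sigma> i < length w" "tvars t \<subseteq> {..<B}"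
  shows "sat w \<sigma> \<Gamma> (thA k B a t) \<longleftrightarrow>
    (\<exists>q<k. \<exists>r<length w. tval w \<sigma> t * k + a = q * length w + r \<and> r \<in> \<Gamma> q)"
proof -
  have T: "tval w (\<sigma>(B := x)) t = tval w \<sigma> t" for x
    by (rule tval_cong) (use assms(3) in auto)
  have P: "sat w (\<sigma>(B := x, Suc B := r)) \<Gamma> (Padd k a q B (Suc B) (Suc (Suc B))) \<longleftrightarrow>
      x * k + a = q * length w + r" if "x < length w" "r < length w" for x r q
  proof -
    have "sat w (\<sigma>(B := x, Suc B := r)) \<Gamma> (Padd k a q B (Suc B) (Suc (Suc B))) \<longleftrightarrow>
      (\<sigma>(B := x, Suc B := r)) B * k + a = q * length w + (\<sigma>(B := x, Suc B := r)) (Suc B)"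
      by (rule sat_Padd) (use assms that in auto)
    then show ?thesis by simp
  qed
  have "sat w \<sigma> \<Gamma> (thA k B a t) \<longleftrightarrow> (\<exists>x<length w. x = tval w \<sigma> t \<and>
     (\<exists>q\<in>{0..<k}. \<exists>r<length w. sat w (\<sigma>(B := x, Suc B := r)) \<Gamma> (Padd k a q B (Suc B) (Suc (Suc B))) \<and> r \<in> \<Gamma> q))"
    unfolding thA_def by (simp add: sat_ors T)
  also have "\<dots> \<longleftrightarrow> (\<exists>x<length w. x = tval w \<sigma> t \<and>
     (\<exists>q<k. \<exists>r<length w. x * k + a = q * length w + r \<and> r \<in> \<Gamma> q))" (is "?L \<longleftrightarrow> ?R")
  proof
    assume ?L
    then obtain x q r where h: "x < length w" "x = tval w \<sigma> t" "q < k" "r < length w"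
      "sat w (\<sigma>(B := x, Suc B := r)) \<Gamma> (Padd k a q B (Suc B) (Suc (Suc B)))" "r \<in> \<Gamma> q" by auto
    then show ?R using P[of x r q] by blast
  next
    assume ?R
    then obtain x q r where h: "x < length w" "x = tval w \<sigma> t" "q < k" "r < length w"
      "x * k + a = q * length w + r" "r \<in> \<Gamma> q" by auto
    then show ?L using P[of x r q] by auto
  qed
  finally show ?thesis using tval_lt[OF assms(1,2), of t] by auto
qed

lemma sat_thB_raw:
  assumes "w \<noteq> []" "\<forall>i. \<sigma> i < length w" "tvars t \<subseteq> {..<B}"
  shows "sat w \<sigma> \<Gamma> (thB k B q t) \<longleftrightarrow>
    (\<exists>a<k. \<exists>x<length w. x * k + a = q * length w + tval w \<sigma> t \<and> x \<in> \<Gamma> a)"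
proof -
  have T: "tval w (\<sigma>(B := x)) t = tval w \<sigma> t" for x
    by (rule tval_cong) (use assms(3) in auto)
  have P: "sat w (\<sigma>(B := r, Suc B := x)) \<Gamma> (Padd k a q (Suc B) B (Suc (Suc B))) \<longleftrightarrow>
      x * k + a = q * length w + r" if "x < length w" "r < length w" for x r a
  proof -
    have "sat w (\<sigma>(B := r, Suc B := x)) \<Gamma> (Padd k a q (Suc B) B (Suc (Suc B))) \<longleftrightarrow>
      (\<sigma>(B := r, Suc B := x)) (Suc B) * k + a = q * length w + (\<sigma>(B := r, Suc B := x)) B"
      by (rule sat_Padd) (use assms that in auto)
    then show ?thesis by simp
  qed
  have "sat w \<sigma> \<Gamma> (thB k B q t) \<longleftrightarrow> (\<exists>r<length w. r = tval w \<sigma> t \<and>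
     (\<exists>a\<in>{0..<k}. \<exists>x<length w. sat w (\<sigma>(B := r, Suc B := x)) \<Gamma> (Padd k a q (Suc B) B (Suc (Suc B))) \<and> x \<in> \<Gamma> a))"
    unfolding thB_def by (simp add: sat_ors T)
  also have "\<dots> \<longleftrightarrow> (\<exists>r<length w. r = tval w \<sigma> t \<and>
     (\<exists>a<k. \<exists>x<length w. x * k + a = q * length w + r \<and> x \<in> \<Gamma> a))" (is "?L \<longleftrightarrow> ?R")
  proof
    assume ?L
    then obtain x a r where h: "r < length w" "r = tval w \<sigma> t" "a < k" "x < length w"
      "sat w (\<sigma>(B := r, Suc B := x)) \<Gamma> (Padd k a q (Suc B) B (Suc (Suc B)))" "x \<in> \<Gamma> a" by auto
    then show ?R using P[of x r a] by blast
  next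
    assume ?R
    then obtain x a r where h: "r < length w" "r = tval w \<sigma> t" "a < k" "x < length w"
      "x * k + a = q * length w + r" "x \<in> \<Gamma> a" by auto
    then show ?L using P[of x r a] by auto
  qed
  finally show ?thesis using tval_lt[OF assms(1,2), of t] by auto
qed

lemma lt_mult_aux: "(X::nat) < n \<Longrightarrow> a < k \<Longrightarrow> X * k + a < n * k"
proof -
  assume "X < n" "a < k"
  then have "X * k + a < X * k + k" by simp
  also have "\<dots> = Suc X * k" by simp
  also have "\<dots> \<le> n * k" using \<open>X < n\<close> by (intro mult_right_mono) auto
  finally show ?thesis .
qed

fun tm :: "trm \<Rightarrow> nat" where
  "tm (TVar i) = i" | "tm TMin = 0" | "tm TMax = 0"

lemma tvars_tm: "tm t < B \<Longrightarrow> tvars t \<subseteq> {..<B}"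
  by (cases t) auto

lemma sat_thA:
  assumes "w \<noteq> []" "\<forall>i. \<sigma> i < length w" "tm t < B" "a < k"
  shows "sat w \<sigma> (assign_concat k (length w) c) (thA k B a t) \<longleftrightarrow>
     tval w \<sigma> t \<in> assign_interleaved k (length w) c a"
proof -
  define n where "n = length w"
  define X where "X = tval w \<sigma> t"
  have X: "X < n" using tval_lt[OF assms(1,2)] by (simp add: X_def n_def)
  have n0: "n > 0" using assms(1) by (simp add: n_def)
  have "sat w \<sigma> (assign_concat k (length w) c) (thA k B a t) \<longleftrightarrow>
    (\<exists>q<k. \<exists>r<n. X * k + a = q * n + r \<and> c ! (q * n + r))"
    unfolding sat_thA_raw[OF assms(1,2) tvars_tm[OF assms(3)]]
    by (auto simp: assign_concat_def X_def n_def)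
  also have "\<dots> \<longleftrightarrow> c ! (X * k + a)"
  proof
    assume "c ! (X * k + a)"
    moreover have "(X * k + a) div n < k"
      using lt_mult_aux[OF X assms(4)] by (intro less_mult_imp_div_less) (simp add: mult.commute)
    moreover have "(X * k + a) mod n < n" using n0 by simp
    moreover have "X * k + a = (X * k + a) div n * n + (X * k + a) mod n" by simp
    ultimately show "\<exists>q<k. \<exists>r<n. X * k + a = q * n + r \<and> c ! (q * n + r)"
      by metis
  qed auto
  finally show ?thesis using X by (simp add: assign_interleaved_def X_def n_def)
qed

lemma sat_thB:
  assumes "w \<noteq> []" "\<forall>i. \<sigma> i < length w" "tm t < B" "q < k"
  shows "sat w \<sigma> (assign_interleaved k (length w) c) (thB k B q t) \<longleftrightarrow>
     tval w \<sigma> t \<in> assign_concat k (length w) c q"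
proof -
  define n where "n = length w"
  define R where "R = tval w \<sigma> t"
  have R: "R < n" using tval_lt[OF assms(1,2)] by (simp add: R_def n_def)
  have k0: "k > 0" using assms(4) by simp
  have "sat w \<sigma> (assign_interleaved k (length w) c) (thB k B q t) \<longleftrightarrow>
    (\<exists>a<k. \<exists>x<n. x * k + a = q * n + R \<and> c ! (x * k + a))"
    unfolding sat_thB_raw[OF assms(1,2) tvars_tm[OF assms(3)]]
    by (auto simp: assign_interleaved_def R_def n_def)
  also have "\<dots> \<longleftrightarrow> c ! (q * n + R)"
  proof
    assume "c ! (q * n + R)"
    moreover have "q * n + R < k * n"
      using lt_mult_aux[OF assms(4) R] by (simp add: mult.commute)
    then have "(q * n + R) div k < n"
      by (intro less_mult_imp_div_less) (simp add: mult.commute)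
    moreover have "(q * n + R) mod k < k" using k0 by simp
    moreover have "q * n + R = (q * n + R) div k * k + (q * n + R) mod k" by simp
    ultimately show "\<exists>a<k. \<exists>x<n. x * k + a = q * n + R \<and> c ! (x * k + a)"
      by metis
  qed auto
  finally show ?thesis using R by (simp add: assign_concat_def R_def n_def)
qed

fun subst :: "(nat \<Rightarrow> trm \<Rightarrow> fo) \<Rightarrow> fo \<Rightarrow> fo" where
  "subst f (FMem i x) = f i x"
| "subst f (FNot \<phi>) = FNot (subst f \<phi>)"
| "subst f (FAnd \<phi> \<psi>) = FAnd (subst f \<phi>) (subst f \<psi>)"
| "subst f (FOr \<phi> \<psi>) = FOr (subst f \<phi>) (subst f \<psi>)"
| "subst f (FEx i \<phi>) = FEx i (subst f \<phi>)"
| "subst f (FAll i \<phi>) = FAll i (subst f \<phi>)"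
| "subst f \<phi> = \<phi>"

fun mvar :: "fo \<Rightarrow> nat" where
  "mvar (FMem i x) = tm x"
| "mvar (FNot \<phi>) = mvar \<phi>"
| "mvar (FAnd \<phi> \<psi>) = max (mvar \<phi>) (mvar \<psi>)"
| "mvar (FOr \<phi> \<psi>) = max (mvar \<phi>) (mvar \<psi>)"
| "mvar (FEx i \<phi>) = mvar \<phi>"
| "mvar (FAll i \<phi>) = mvar \<phi>"
| "mvar \<phi> = 0"

lemma sat_subst:
  assumes "w \<noteq> []"
    and "\<And>i t \<sigma>. i \<in> sovars \<phi> \<Longrightarrow> tm t < B \<Longrightarrow> \<forall>v. \<sigma> v < length w \<Longrightarrow>
          sat w \<sigma> \<Gamma>' (f i t) \<longleftrightarrow> tval w \<sigma> t \<in> \<Gamma> i"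
    and "mvar \<phi> < B" "\<forall>v. \<sigma> v < length w"
  shows "sat w \<sigma> \<Gamma>' (subst f \<phi>) \<longleftrightarrow> sat w \<sigma> \<Gamma> \<phi>"
  using assms(2-4)
proof (induction \<phi> arbitrary: \<sigma>)
  case (FEx i \<phi>)
  have "sat w (\<sigma>(i := j)) \<Gamma>' (subst f \<phi>) \<longleftrightarrow> sat w (\<sigma>(i := j)) \<Gamma> \<phi>" if "j < length w" for j
    by (rule FEx.IH) (use FEx.prems that in auto)
  then show ?case by auto
next
  case (FAll i \<phi>)
  have "sat w (\<sigma>(i := j)) \<Gamma>' (subst f \<phi>) \<longleftrightarrow> sat w (\<sigma>(i := j)) \<Gamma> \<phi>" if "j < length w" for j
    by (rule FAll.IH) (use FAll.prems that in auto)
  then show ?case by auto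
qed auto

lemma fv_subst: "(\<And>i t. fv (f i t) \<subseteq> tvars t) \<Longrightarrow> fv (subst f \<phi>) \<subseteq> fv \<phi>"
  by (induction \<phi>) auto

lemma sovars_subst: "(\<And>i t. sovars (f i t) \<subseteq> S) \<Longrightarrow> sovars (subst f \<phi>) \<subseteq> S"
  by (induction \<phi>) auto

lemma letters_subst: "(\<And>i t. letters (f i t) = {}) \<Longrightarrow> letters (subst f \<phi>) \<subseteq> letters \<phi>"
  by (induction \<phi>) auto

lemma ors_syn: "fv (ors fs) = \<Union>(fv ` set fs)" "sovars (ors fs) = \<Union>(sovars ` set fs)"
  "letters (ors fs) = \<Union>(letters ` set fs)"
  by (induction fs) (auto simp: FF_def)

lemma Succ_syn: "fv (Succ e u b) \<subseteq> {e, u}" "sovars (Succ e u b) = {}" "letters (Succ e u b) = {}"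
  by (auto simp: Succ_def)

lemma Wrap_syn: "fv (Wrap u x v b) \<subseteq> {u, x, v}" "sovars (Wrap u x v b) = {}" "letters (Wrap u x v b) = {}"
  using Succ_syn[of "Suc b" u "Suc (Suc b)"] unfolding Wrap_def by auto

lemma Pmul_fv: "fv (Pmul j c x v b) \<subseteq> {x, v}"
proof (induction j arbitrary: c v b)
  case (Suc j)
  show ?case using Suc.IH[of c b "Suc b"] Suc.IH[of "c-1" b "Suc b"] Wrap_syn(1)[of b x v "Suc b"]
    by (auto simp: FF_def)
qed (simp add: FF_def)

lemma Pmul_so: "sovars (Pmul j c x v b) = {}" "letters (Pmul j c x v b) = {}"
  by (induction j arbitrary: c v b) (simp_all add: FF_def Wrap_syn)

lemmas Pmul_syn = Pmul_fv Pmul_so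

lemma Padd_fv: "fv (Padd k i c x v b) \<subseteq> {x, v}"
proof (induction i arbitrary: c v b)
  case (Suc i)
  show ?case using Suc.IH[of c b "Suc b"] Suc.IH[of "c-1" b "Suc b"] Succ_syn(1)[of b v "Suc b"]
    by (auto simp: FF_def)
qed (simp add: Pmul_fv)

lemma Padd_so: "sovars (Padd k i c x v b) = {}" "letters (Padd k i c x v b) = {}"
  by (induction i arbitrary: c v b) (simp_all add: FF_def Succ_syn Pmul_so)

lemmas Padd_syn = Padd_fv Padd_so

lemma thA_syn: "fv (thA k B a t) \<subseteq> tvars t" "sovars (thA k B a t) \<subseteq> {..<k}" "letters (thA k B a t) = {}"
proof -
  have "fv (FEx (Suc B) (FAnd (Padd k a q B (Suc B) (Suc (Suc B))) (FMem q (TVar (Suc B))))) \<subseteq> {B}" for q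
    using Padd_fv[of k a q B "Suc B" "Suc (Suc B)"] by auto
  then show "fv (thA k B a t) \<subseteq> tvars t" unfolding thA_def by (auto simp: ors_syn)
  show "sovars (thA k B a t) \<subseteq> {..<k}" "letters (thA k B a t) = {}"
    unfolding thA_def by (auto simp: ors_syn Padd_so)
qed

lemma thB_syn: "fv (thB k B q t) \<subseteq> tvars t" "sovars (thB k B q t) \<subseteq> {..<k}" "letters (thB k B q t) = {}"
proof -
  have "fv (FEx (Suc B) (FAnd (Padd k a q (Suc B) B (Suc (Suc B))) (FMem a (TVar (Suc B))))) \<subseteq> {B}" for a
    using Padd_fv[of k a q "Suc B" B "Suc (Suc B)"] by auto
  then show "fv (thB k B q t) \<subseteq> tvars t" unfolding thB_def by (auto simp: ors_syn)
  show "sovars (thB k B q t) \<subseteq> {..<k}" "letters (thB k B q t) = {}"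
    unfolding thB_def by (auto simp: ors_syn Padd_so)
qed

lemma letter_at_cong:
  assumes "length \<psi>s = length \<phi>s"
    and "\<And>j. j < length \<phi>s \<Longrightarrow> sat w (\<lambda>_. 0) \<Gamma> (\<psi>s ! j) \<longleftrightarrow> sat w (\<lambda>_. 0) \<Gamma>' (\<phi>s ! j)"
  shows "letter_at w \<Gamma> \<psi>s = letter_at w \<Gamma>' \<phi>s"
proof -
  have e: "(\<lambda>j. j < length \<phi>s \<and> sat w (\<lambda>_. 0) \<Gamma> (\<psi>s ! j)) = (\<lambda>j. j < length \<phi>s \<and> sat w (\<lambda>_. 0) \<Gamma>' (\<phi>s ! j))"
    using assms(2) by auto
  have e2: "(\<exists>j<length \<phi>s. sat w (\<lambda>_. 0) \<Gamma> (\<psi>s ! j)) \<longleftrightarrow> (\<exists>j<length \<phi>s. sat w (\<lambda>_. 0) \<Gamma>' (\<phi>s ! j))"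
    using assms(2) by auto
  show ?thesis unfolding letter_at_def assms(1) e e2 ..
qed

lemma transfer:
  fixes dec1 dec2 :: "nat \<Rightarrow> nat \<Rightarrow> bool list \<Rightarrow> nat \<Rightarrow> nat set"
  assumes q: "qsentence s t k \<phi>s"
    and f1: "\<And>i x. fv (f i x) \<subseteq> tvars x"
    and f2: "\<And>i x. sovars (f i x) \<subseteq> {..<k}"
    and f3: "\<And>i x. letters (f i x) = {}"
    and f4: "\<And>w \<sigma> c i x. w \<noteq> [] \<Longrightarrow> \<forall>v. \<sigma> v < length w \<Longrightarrow> i < k \<Longrightarrow> tm x < B \<Longrightarrow>
        sat w \<sigma> (dec2 k (length w) c) (f i x) \<longleftrightarrow> tval w \<sigma> x \<in> dec1 k (length w) c i"
    and B: "\<And>\<phi>. \<phi> \<in> set \<phi>s \<Longrightarrow> mvar \<phi> < B"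
  shows "qsentence s t k (map (subst f) \<phi>s) \<and>
    (\<forall>w\<in>strings t. quant_word dec1 w k \<phi>s = quant_word dec2 w k (map (subst f) \<phi>s))"
proof
  show "qsentence s t k (map (subst f) \<phi>s)"
    using q fv_subst[OF f1] sovars_subst[OF f2] letters_subst[OF f3] unfolding qsentence_def
    by fastforce
  show "\<forall>w\<in>strings t. quant_word dec1 w k \<phi>s = quant_word dec2 w k (map (subst f) \<phi>s)"
  proof
    fix w assume "w \<in> strings t"
    then have w: "w \<noteq> []" by (simp add: strings_def)
    have "letter_at w (dec2 k (length w) c) (map (subst f) \<phi>s) = letter_at w (dec1 k (length w) c) \<phi>s" for c
    proof (rule letter_at_cong)
      fix j assume j: "j < length \<phi>s"
      then have mem: "\<phi>s ! j \<in> set \<phi>s" by simp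
      have so: "sovars (\<phi>s ! j) \<subseteq> {..<k}" using q mem unfolding qsentence_def by blast
      show "sat w (\<lambda>_. 0) (dec2 k (length w) c) (map (subst f) \<phi>s ! j) \<longleftrightarrow> sat w (\<lambda>_. 0) (dec1 k (length w) c) (\<phi>s ! j)"
        unfolding nth_map[OF j]
        by (rule sat_subst[OF w]) (use f4[OF w] so B[OF mem] w in auto)
    qed simp
    then show "quant_word dec1 w k \<phi>s = quant_word dec2 w k (map (subst f) \<phi>s)"
      unfolding quant_word_def by simp
  qed
qed

theorem proposition2p7:
  fixes L :: "nat list set" and s t :: nat
  assumes "1 \<le> s" and "L \<subseteq> lists {..<s}"
  shows "(\<forall>k \<phi>s. qsentence s t k \<phi>s \<longrightarrow>
            (\<exists>k' \<psi>s. qsentence s t k' \<psi>s \<and>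
               (\<forall>w\<in>strings t. holds_Q1 L w k \<phi>s \<longleftrightarrow> holds_Qstar L w k' \<psi>s)))
       \<and> (\<forall>k \<psi>s. qsentence s t k \<psi>s \<longrightarrow>
            (\<exists>k' \<phi>s. qsentence s t k' \<phi>s \<and>
               (\<forall>w\<in>strings t. holds_Qstar L w k \<psi>s \<longleftrightarrow> holds_Q1 L w k' \<phi>s)))"
proof (intro conjI allI impI)
  fix k \<phi>s assume q: "qsentence s t k \<phi>s"
  define B where "B = Suc (sum_list (map mvar \<phi>s))"
  have B: "mvar \<phi> < B" if "\<phi> \<in> set \<phi>s" for \<phi>
    using member_le_sum_list[of "mvar \<phi>" "map mvar \<phi>s"] that by (simp add: B_def)
  have T: "qsentence s t k (map (subst (thA k B)) \<phi>s) \<and>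
    (\<forall>w\<in>strings t. quant_word assign_interleaved w k \<phi>s = quant_word assign_concat w k (map (subst (thA k B)) \<phi>s))"
    by (rule transfer[where B=B, OF q thA_syn(1) thA_syn(2) thA_syn(3) _ B]) (rule sat_thA; assumption)
  then show "\<exists>k' \<psi>s. qsentence s t k' \<psi>s \<and>
               (\<forall>w\<in>strings t. holds_Q1 L w k \<phi>s \<longleftrightarrow> holds_Qstar L w k' \<psi>s)"
    unfolding holds_Q1_def holds_Qstar_def by metis
next
  fix k \<psi>s assume q: "qsentence s t k \<psi>s"
  define B where "B = Suc (sum_list (map mvar \<psi>s))"
  have B: "mvar \<phi> < B" if "\<phi> \<in> set \<psi>s" for \<phi>
    using member_le_sum_list[of "mvar \<phi>" "map mvar \<psi>s"] that by (simp add: B_def)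
  have T: "qsentence s t k (map (subst (thB k B)) \<psi>s) \<and>
    (\<forall>w\<in>strings t. quant_word assign_concat w k \<psi>s = quant_word assign_interleaved w k (map (subst (thB k B)) \<psi>s))"
    by (rule transfer[where B=B, OF q thB_syn(1) thB_syn(2) thB_syn(3) _ B]) (rule sat_thB; assumption)
  then show "\<exists>k' \<phi>s. qsentence s t k' \<phi>s \<and>
               (\<forall>w\<in>strings t. holds_Qstar L w k \<psi>s \<longleftrightarrow> holds_Q1 L w k' \<phi>s)"
    unfolding holds_Q1_def holds_Qstar_def by metis
qed

end
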